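(* Let $d\ge1$, let $\mu$ be a probability distribution supported in the unit hypercube $[0,1]^d$, let $\mu_n$ be an empirical distribution of $\mu$ on $n$ samples, let $\alpha\ge0$, and let $\mathcal{G}$ be a grid partitioning $[0,1]^d$ into axis-aligned cubic cells of side length $n^{-\alpha}$. Then with high probability $\mathrm{Exc}_\mu(\mathcal{G})=\tilde O\!\left(n^{\frac{d\alpha}{2}-\frac12}\right)$.
   Context: For a cell $\Box$ of $\mathcal{G}$, $\mu(\Box)$ and $\mu_n(\Box)$ denote the mass of $\mu$ and $\mu_n$ in $\Box$. The excess of a cell is $\mathrm{Exc}_\mu(\Box)=\max\{0,\mu(\Box)-\mu_n(\Box)\}$ and $\mathrm{Exc}_\mu(\mathcal{G})=\sum_{\Box\in\mathcal{G}}\mathrm{Exc}_\mu(\Box)$. An empirical distribution $\mu_n$ is $\frac1n\sum_{i=1}^n\delta_{x_i}$ with $x_i$ i.i.d. from $\mu$. $\tilde O(\cdot)$ hides polylogarithmic factors in $n$; "with high probability" means with probability at least $1-n^{-c}$ for some constant $c>0$. *)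

theory Defs
  imports "HOL-Probability.Probability"
begin

definition unit_cube :: "(real ^ 'd) set" where
  "unit_cube = {x. \<forall>i. 0 \<le> x $ i \<and> x $ i \<le> 1}"

text \<open>Each point of the cube is assigned to the cell whose i-th index is
  min(floor(x_i / s), M - 1); this partitions the cube (the last layer of
  cells is closed on the boundary face x_i = 1).\<close>
definition grid_size :: "real \<Rightarrow> nat" where
  "grid_size s = nat \<lceil>1 / s\<rceil>"

definition grid_index :: "real \<Rightarrow> real ^ 'd \<Rightarrow> 'd \<Rightarrow> nat" where
  "grid_index s x i = min (nat \<lfloor>x $ i / s\<rfloor>) (grid_size s - 1)"

definition grid_cells :: "real \<Rightarrow> ('d \<Rightarrow> nat) set" where
  "grid_cells s = {k. \<forall>i. k i < grid_size s}"

definition grid_cell :: "real \<Rightarrow> ('d \<Rightarrow> nat) \<Rightarrow> (real ^ 'd) set" where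
  "grid_cell s k = {x \<in> unit_cube. \<forall>i. grid_index s x i = k i}"

text \<open>Mass of the empirical distribution (1/n) sum_{j<n} delta_{xs j} in a set B.\<close>
definition emp_mass :: "nat \<Rightarrow> (nat \<Rightarrow> 'a) \<Rightarrow> 'a set \<Rightarrow> real" where
  "emp_mass n xs B = real (card {j \<in> {..<n}. xs j \<in> B}) / real n"

definition grid_excess :: "(real ^ 'd) measure \<Rightarrow> nat \<Rightarrow> (nat \<Rightarrow> real ^ 'd) \<Rightarrow> real \<Rightarrow> real" where
  "grid_excess \<mu> n xs s =
     (\<Sum>k\<in>grid_cells s. max 0 (measure \<mu> (grid_cell s k) - emp_mass n xs (grid_cell s k)))"

end

theory Submission
  imports Defs
begin

lemma indep_coords:
  assumes P: "prob_space \<mu>" and sp: "space \<mu> = UNIV" and I: "I \<noteq> {}"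
  shows "prob_space.indep_vars (PiM I (\<lambda>_. \<mu>)) (\<lambda>_. \<mu>) (\<lambda>i x. x i) I"
proof -
  interpret M: prob_space "PiM I (\<lambda>_. \<mu>)" by (rule prob_space_PiM) (use P in auto)
  have rv: "(\<lambda>x. x i) \<in> measurable (PiM I (\<lambda>_. \<mu>)) \<mu>" for i
  proof (cases "i \<in> I")
    case True then show ?thesis by measurable
  next
    case False
    have "(\<lambda>x. undefined) \<in> measurable (PiM I (\<lambda>_. \<mu>)) \<mu>" using sp by simp
    then show ?thesis
      by (rule measurable_cong[THEN iffD1, rotated]) (use False in \<open>auto simp: space_PiM\<close>)
  qed
  show ?thesis
  proof (subst M.indep_vars_iff_distr_eq_PiM[OF I rv])
    have "distr (PiM I (\<lambda>_. \<mu>)) (PiM I (\<lambda>_. \<mu>)) (\<lambda>x. \<lambda>i\<in>I. x i) = distr (PiM I (\<lambda>_. \<mu>)) (PiM I (\<lambda>_. \<mu>)) (\<lambda>x. x)"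
      by (rule distr_cong) (auto simp: space_PiM)
    also have "\<dots> = PiM I (\<lambda>_. \<mu>)" by (simp add: distr_id)
    also have "\<dots> = PiM I (\<lambda>i. distr (PiM I (\<lambda>_. \<mu>)) \<mu> (\<lambda>x. x i))"
      apply (rule PiM_cong) using distr_PiM_component[of I "\<lambda>_. \<mu>"] P by auto
    finally show "distr (PiM I (\<lambda>_. \<mu>)) (PiM I (\<lambda>_. \<mu>)) (\<lambda>x. \<lambda>i\<in>I. x i) = PiM I (\<lambda>i. distr (PiM I (\<lambda>_. \<mu>)) \<mu> (\<lambda>x. x i))" .
  qed
qed

lemma hoeff:
  assumes P: "prob_space \<mu>" and sp: "space \<mu> = UNIV" and B: "B \<in> sets \<mu>" and n: "n > 0" and e: "\<epsilon> \<ge> 0"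
  shows "measure (PiM {..<n} (\<lambda>_. \<mu>)) {xs \<in> space (PiM {..<n} (\<lambda>_. \<mu>)). emp_mass n xs B \<le> measure \<mu> B - \<epsilon>}
          \<le> exp (-2 * n * \<epsilon>\<^sup>2)"
proof -
  let ?M = "PiM {..<n} (\<lambda>_. \<mu>)"
  interpret M: prob_space ?M by (rule prob_space_PiM) (use P in auto)
  have I: "{..<n} \<noteq> {}" using n by auto
  have ind: "M.indep_vars (\<lambda>_. borel) (\<lambda>i xs. indicator B (xs i) :: real) {..<n}"
    using M.indep_vars_compose2[OF indep_coords[OF P sp I], of "\<lambda>_ x. indicator B x :: real" "\<lambda>_. borel"] B
    by simp
  have comp: "distr ?M \<mu> (\<lambda>x. x i) = \<mu>" if "i < n" for i
    using distr_PiM_component[of "{..<n}" "\<lambda>_. \<mu>" i] P that by simp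
  have dX: "distr ?M borel (\<lambda>xs. indicator B (xs i) :: real) = distr \<mu> borel (indicator B)" if "i < n" for i
  proof -
    have "distr ?M borel (\<lambda>xs. indicator B (xs i) :: real) = distr (distr ?M \<mu> (\<lambda>x. x i)) borel (indicator B)"
      by (subst distr_distr) (use that B in \<open>auto simp: comp_def\<close>)
    then show ?thesis using comp[OF that] by simp
  qed
  interpret H: Hoeffding_ineq_iid ?M "{..<n}" "\<lambda>i xs. indicator B (xs i) :: real" "\<lambda>xs. indicator B (xs 0)" 0 1
     "M.expectation (\<lambda>xs. indicator B (xs 0))"
  proof unfold_locales
    show "M.indep_vars (\<lambda>_. borel) (\<lambda>i xs. indicator B (xs i) :: real) {..<n}" by (rule ind)
    show "distr ?M borel (\<lambda>xs. indicator B (xs i) :: real) = distr ?M borel (\<lambda>xs. indicator B (xs 0))" if "i \<in> {..<n}" for i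
      using dX[of i] dX[of 0] that n by simp
    show "(\<lambda>xs. indicator B (xs 0) :: real) \<in> borel_measurable ?M" using measurable_compose[OF measurable_component_singleton[of 0 "{..<n}" "\<lambda>_. \<mu>"] borel_measurable_indicator[OF B]] n by (simp add: comp_def)
    show "AE x in ?M. (indicator B (x 0) :: real) \<in> {0..1}" by (auto simp: indicator_def)
  qed simp_all
  have i0: "0 \<in> {..<n}" using n by simp
  have mc: "(\<lambda>x. x 0) \<in> measurable ?M \<mu>" using measurable_component_singleton[OF i0, of "\<lambda>_. \<mu>"] by simp
  have mi: "(indicator B :: _ \<Rightarrow> real) \<in> borel_measurable \<mu>" using B by simp
  have E: "M.expectation (\<lambda>xs. indicator B (xs 0) :: real) = measure \<mu> B"
  proof -
    have "M.expectation (\<lambda>xs. indicator B (xs 0) :: real) = integral\<^sup>L (distr ?M \<mu> (\<lambda>x. x 0)) (indicator B)"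
      using integral_distr[OF mc mi] by simp
    also have "\<dots> = measure \<mu> B" using comp[of 0] n B P
      by (simp add: prob_space.emeasure_space_1 finite_measure.emeasure_finite prob_space_def)
    finally show ?thesis .
  qed
  have eq: "{xs \<in> space ?M. emp_mass n xs B \<le> measure \<mu> B - \<epsilon>} =
     {xs \<in> space ?M. (\<Sum>i\<in>{..<n}. indicator B (xs i)) / real (card {..<n}) \<le> M.expectation (\<lambda>xs. indicator B (xs 0)) - \<epsilon>}"
  proof -
    have "real (card {j \<in> {..<n}. xs j \<in> B}) = (\<Sum>i\<in>{..<n}. indicator B (xs i))" for xs :: "nat \<Rightarrow> _"
      by (simp add: indicator_def sum.If_cases Int_def)
    then show ?thesis by (simp add: emp_mass_def E)
  qed
  show ?thesis
    unfolding eq using H.Hoeffding_ineq_le'[OF e _ I] by simp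
qed

lemma num:
  fixes n :: nat and \<alpha> K :: real and d :: nat
  assumes n: "n \<ge> 3" and a: "\<alpha> \<ge> 0" and K: "K \<le> (2 * real n powr \<alpha>) ^ d" and K0: "K \<ge> 0"
  shows "2 powr K * exp (- 2 * real n * (2 ^ d * ln (real n) ^ 1 * real n powr (real d * \<alpha> / 2 - 1 / 2))\<^sup>2)
         \<le> real n powr (- 1)"
proof -
  define L where "L = ln (real n)"
  define A where "A = real n powr \<alpha>"
  have n0: "real n > 0" using n by simp
  have L1: "L \<ge> 1"
  proof -
    have "exp 1 \<le> (3::real)" using exp_le by simp
    also have "\<dots> \<le> real n" using n by simp
    finally show ?thesis unfolding L_def using n0 by (simp add: ln_ge_iff)
  qed
  have A1: "A \<ge> 1" unfolding A_def using n a by (simp add: ge_one_powr_ge_zero)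
  have pw: "(real n powr (real d * \<alpha> / 2 - 1 / 2))\<^sup>2 = A ^ d / real n"
  proof -
    have "(real n powr (real d * \<alpha> / 2 - 1 / 2))\<^sup>2 = real n powr (of_nat 2 * (real d * \<alpha> / 2 - 1 / 2))"
      using powr_power[of "real n" "real d * \<alpha> / 2 - 1 / 2" 2] n0 by simp
    also have "of_nat 2 * (real d * \<alpha> / 2 - 1 / 2) = real d * \<alpha> - 1" by simp
    also have "real n powr (real d * \<alpha> - 1) = real n powr (real d * \<alpha>) / real n powr 1"
      by (rule powr_diff)
    also have "real n powr 1 = real n" using n0 by simp
    also have "real n powr (real d * \<alpha>) = A ^ d"
      unfolding A_def using powr_power[of "real n" \<alpha> d] n0 by simp
    finally show ?thesis .
  qed
  have ex: "2 * real n * (2 ^ d * L ^ 1 * real n powr (real d * \<alpha> / 2 - 1 / 2))\<^sup>2 = 2 * 4 ^ d * L\<^sup>2 * A ^ d"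
  proof -
    have p4: "((2::real) ^ d)\<^sup>2 = 4 ^ d"
    proof -
      have "((2::real) ^ d)\<^sup>2 = (2\<^sup>2) ^ d" by (metis power_mult mult.commute)
      then show ?thesis by simp
    qed
    have "(2 ^ d * L ^ 1 * real n powr (real d * \<alpha> / 2 - 1 / 2))\<^sup>2 = ((2::real) ^ d)\<^sup>2 * L\<^sup>2 * (real n powr (real d * \<alpha> / 2 - 1 / 2))\<^sup>2"
      by (simp only: power_mult_distrib power_one_right)
    also have "\<dots> = 4 ^ d * L\<^sup>2 * (A ^ d / real n)" by (simp only: p4 pw)
    finally have e1: "(2 ^ d * L ^ 1 * real n powr (real d * \<alpha> / 2 - 1 / 2))\<^sup>2 = 4 ^ d * L\<^sup>2 * (A ^ d / real n)" .
    have "2 * real n * (4 ^ d * L\<^sup>2 * (A ^ d / real n)) = 2 * 4 ^ d * L\<^sup>2 * A ^ d"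
      using n0 by simp
    then show ?thesis unfolding e1 .
  qed
  have Ad: "A ^ d \<ge> 1" using A1 by simp
  have "K \<le> 2 ^ d * A ^ d" using K unfolding A_def by (simp add: power_mult_distrib)
  also have "\<dots> \<le> 4 ^ d * L\<^sup>2 * A ^ d"
  proof -
    have "(2::real) ^ d \<le> 4 ^ d" by (rule power_mono) auto
    moreover have "L\<^sup>2 \<ge> 1" using L1 by (simp add: one_le_power)
    ultimately have "(2::real) ^ d * 1 \<le> 4 ^ d * L\<^sup>2"
      by (intro mult_mono) auto
    then have "(2::real) ^ d * A ^ d \<le> (4 ^ d * L\<^sup>2) * A ^ d"
      using Ad by (intro mult_right_mono) auto
    then show ?thesis by simp
  qed
  finally have K2: "K \<le> 4 ^ d * L\<^sup>2 * A ^ d" .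
  have L2: "L \<le> 4 ^ d * L\<^sup>2 * A ^ d"
  proof -
    have "L \<le> L\<^sup>2" using L1 by (simp add: power2_eq_square)
    also have "\<dots> \<le> 4 ^ d * L\<^sup>2 * A ^ d"
    proof -
      have "(1::real) * 1 \<le> 4 ^ d * A ^ d" using Ad by (intro mult_mono) (auto simp: one_le_power)
      then have "L\<^sup>2 * 1 \<le> L\<^sup>2 * (4 ^ d * A ^ d)" by (intro mult_left_mono) auto
      then show ?thesis by (simp add: mult_ac)
    qed
    finally show ?thesis .
  qed
  have "K * ln 2 \<le> K" using K0 ln_2_less_1 by (simp add: mult_left_le)
  then have key: "K * ln 2 - 2 * 4 ^ d * L\<^sup>2 * A ^ d \<le> - L" using K2 L2 by linarith
  have "2 powr K * exp (- (2 * 4 ^ d * L\<^sup>2 * A ^ d)) = exp (K * ln 2 - 2 * 4 ^ d * L\<^sup>2 * A ^ d)"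
    by (simp add: powr_def exp_diff exp_minus field_simps)
  also have "\<dots> \<le> exp (- L)" using key by simp
  also have "exp (- L) = real n powr (- 1)" unfolding L_def using n0 by (simp add: powr_def)
  finally have fin: "2 powr K * exp (- (2 * 4 ^ d * L\<^sup>2 * A ^ d)) \<le> real n powr (- 1)" .
  have ex': "- 2 * real n * (2 ^ d * L ^ 1 * real n powr (real d * \<alpha> / 2 - 1 / 2))\<^sup>2 = - (2 * 4 ^ d * L\<^sup>2 * A ^ d)"
    using ex by linarith
  show ?thesis unfolding L_def[symmetric] ex' by (rule fin)
qed

lemma emp_mass_meas:
  assumes B: "B \<in> sets \<mu>"
  shows "(\<lambda>xs. emp_mass n xs B) \<in> borel_measurable (PiM {..<n} (\<lambda>_. \<mu>))"
proof -
  have "real (card {j \<in> {..<n}. xs j \<in> B}) = (\<Sum>i\<in>{..<n}. indicator B (xs i))" for xs :: "nat \<Rightarrow> _"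
    by (simp add: indicator_def sum.If_cases Int_def)
  then have eq: "(\<lambda>xs. emp_mass n xs B) = (\<lambda>xs. (\<Sum>i\<in>{..<n}. indicator B (xs i)) / real n)"
    by (simp add: emp_mass_def fun_eq_iff)
  have "(\<lambda>xs. indicator B (xs i) :: real) \<in> borel_measurable (PiM {..<n} (\<lambda>_. \<mu>))" if "i \<in> {..<n}" for i
    using measurable_compose[OF measurable_component_singleton[OF that, of "\<lambda>_. \<mu>"] borel_measurable_indicator[OF B]]
    by (simp add: comp_def)
  then show ?thesis unfolding eq by (intro borel_measurable_divide borel_measurable_sum) auto
qed

lemma cells_disj: "k \<noteq> k' \<Longrightarrow> grid_cell s k \<inter> grid_cell s k' = {}"
  unfolding grid_cell_def by auto

lemma cells_finite: "finite (grid_cells s :: ('d::finite \<Rightarrow> nat) set)"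
  and cells_card: "card (grid_cells s :: ('d::finite \<Rightarrow> nat) set) = grid_size s ^ CARD('d)"
proof -
  have eq: "(grid_cells s :: ('d \<Rightarrow> nat) set) = PiE UNIV (\<lambda>_. {..<grid_size s})"
    by (auto simp: grid_cells_def PiE_UNIV_domain)
  show "finite (grid_cells s :: ('d::finite \<Rightarrow> nat) set)" unfolding eq by (rule finite_PiE) auto
  show "card (grid_cells s :: ('d::finite \<Rightarrow> nat) set) = grid_size s ^ CARD('d)"
    unfolding eq by (simp add: card_PiE)
qed

lemma emp_union:
  assumes S: "finite S" and disj: "\<And>k k'. k \<in> S \<Longrightarrow> k' \<in> S \<Longrightarrow> k \<noteq> k' \<Longrightarrow> A k \<inter> A k' = {}"
  shows "emp_mass n xs (\<Union>k\<in>S. A k) = (\<Sum>k\<in>S. emp_mass n xs (A k))"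
proof -
  have "{j \<in> {..<n}. xs j \<in> (\<Union>k\<in>S. A k)} = (\<Union>k\<in>S. {j \<in> {..<n}. xs j \<in> A k})" by auto
  then have "card {j \<in> {..<n}. xs j \<in> (\<Union>k\<in>S. A k)} = (\<Sum>k\<in>S. card {j \<in> {..<n}. xs j \<in> A k})"
    using S disj by (simp add: card_UN_disjoint) (subst card_UN_disjoint, auto)
  then show ?thesis unfolding emp_mass_def by (simp add: sum_divide_distrib[symmetric])
qed

lemma main_bound:
  fixes \<mu> :: "(real ^ 'd) measure" and n :: nat and \<alpha> :: real
  assumes "\<alpha> \<ge> 0" and P: "prob_space \<mu>" and sb: "sets \<mu> = sets borel" and n: "3 \<le> n"
  shows "1 - real n powr (- 1) \<le> measure (PiM {..<n} (\<lambda>_. \<mu>)) {xs \<in> space (PiM {..<n} (\<lambda>_. \<mu>)). grid_excess \<mu> n xs (real n powr (- \<alpha>)) \<le> 2 ^ CARD('d) * ln (real n) ^ 1 * real n powr (real CARD('d) * \<alpha> / 2 - 1 / 2)}"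
proof -
  interpret mu: prob_space \<mu> by (rule P)
  let ?M = "PiM {..<n} (\<lambda>_. \<mu>)"
  interpret M: prob_space ?M by (rule prob_space_PiM) (use P in auto)
  define s where "s = real n powr (-\<alpha>)"
  define t where "t = 2 ^ CARD('d) * ln (real n) ^ 1 * real n powr (real CARD('d) * \<alpha> / 2 - 1 / 2)"
  define cells where "cells = (grid_cells s :: ('d \<Rightarrow> nat) set)"
  define U where "U S = (\<Union>k\<in>S. grid_cell s k :: (real ^ 'd) set)" for S :: "('d \<Rightarrow> nat) set"
  define A where "A S = {xs :: nat \<Rightarrow> real ^ 'd \<in> space ?M. emp_mass n xs (U S) \<le> measure \<mu> (U S) - t}" for S :: "('d \<Rightarrow> nat) set"
  have sp: "space \<mu> = UNIV" using sets_eq_imp_space_eq[OF sb] by simp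
  have n0: "n > 0" using n by simp
  have t0: "t \<ge> 0" unfolding t_def using n by simp
  have fin: "finite cells" unfolding cells_def by (rule cells_finite)
  have cellB: "grid_cell s k \<in> sets \<mu>" for k
    unfolding sb grid_cell_def unit_cube_def grid_index_def by measurable
  have UB: "U S \<in> sets \<mu>" if "S \<subseteq> cells" for S
    unfolding U_def by (rule sets.finite_UN[OF finite_subset[OF that fin] cellB])
  have Ameas: "A S \<in> sets ?M" if "S \<subseteq> cells" for S
    unfolding A_def by (rule borel_measurable_le[OF emp_mass_meas[OF UB[OF that]] borel_measurable_const])
  have AP: "measure ?M (A S) \<le> exp (- 2 * real n * t\<^sup>2)" if "S \<subseteq> cells" for S
    unfolding A_def by (rule hoeff[OF P sp UB[OF that] n0 t0])
  have Gmeas: "{xs \<in> space ?M. grid_excess \<mu> n xs s \<le> t} \<in> sets ?M"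
  proof -
    have "(\<lambda>xs. grid_excess \<mu> n xs s) \<in> borel_measurable ?M"
      unfolding grid_excess_def
      by (intro borel_measurable_sum borel_measurable_max borel_measurable_const borel_measurable_diff emp_mass_meas cellB)
    then show ?thesis by (rule borel_measurable_le[OF _ borel_measurable_const])
  qed
  have bad: "space ?M - {xs \<in> space ?M. grid_excess \<mu> n xs s \<le> t} \<subseteq> (\<Union>S\<in>Pow cells. A S)"
  proof
    fix xs assume xs: "xs \<in> space ?M - {xs \<in> space ?M. grid_excess \<mu> n xs s \<le> t}"
    define S where "S = {k \<in> cells. measure \<mu> (grid_cell s k) - emp_mass n xs (grid_cell s k) > 0}"
    have SC: "S \<subseteq> cells" unfolding S_def by auto
    have finS: "finite S" using fin SC by (rule finite_subset[rotated])
    have "grid_excess \<mu> n xs s = (\<Sum>k\<in>cells. if k \<in> S then measure \<mu> (grid_cell s k) - emp_mass n xs (grid_cell s k) else 0)"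
      unfolding grid_excess_def cells_def[symmetric] by (intro sum.cong) (auto simp: S_def)
    also have "\<dots> = (\<Sum>k\<in>S. measure \<mu> (grid_cell s k) - emp_mass n xs (grid_cell s k))"
      using fin SC by (simp add: sum.If_cases Int_absorb1)
    also have "\<dots> = measure \<mu> (U S) - emp_mass n xs (U S)"
    proof -
      have "measure \<mu> (U S) = (\<Sum>k\<in>S. measure \<mu> (grid_cell s k))"
      proof -
        have "disjoint_family_on (grid_cell s) S"
          unfolding disjoint_family_on_def using cells_disj[of _ _ s] by blast
        then show ?thesis
          unfolding U_def using finS cellB by (intro measure_finite_Union) auto
      qed
      moreover have "emp_mass n xs (U S) = (\<Sum>k\<in>S. emp_mass n xs (grid_cell s k))"
        unfolding U_def by (rule emp_union[OF finS]) (rule cells_disj)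
      ultimately show ?thesis by (simp add: sum_subtractf)
    qed
    moreover have "\<not> grid_excess \<mu> n xs s \<le> t" using xs by blast
    ultimately have "measure \<mu> (U S) - emp_mass n xs (U S) > t" by linarith
    moreover have "xs \<in> space ?M" using xs by blast
    ultimately have "xs \<in> A S" unfolding A_def by simp
    then show "xs \<in> (\<Union>S\<in>Pow cells. A S)" using SC by auto
  qed
  have "M.prob (space ?M - {xs \<in> space ?M. grid_excess \<mu> n xs s \<le> t}) \<le> M.prob (\<Union>S\<in>Pow cells. A S)"
    by (rule M.finite_measure_mono[OF bad sets.finite_UN]) (use fin Ameas in simp_all)
  also have "\<dots> \<le> (\<Sum>S\<in>Pow cells. M.prob (A S))"
    by (rule M.finite_measure_subadditive_finite) (use fin Ameas in \<open>simp_all add: image_subset_iff\<close>)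
  also have "\<dots> \<le> (\<Sum>S\<in>Pow cells. exp (- 2 * real n * t\<^sup>2))"
    by (rule sum_mono) (use AP in simp)
  also have "\<dots> = 2 powr real (card cells) * exp (- 2 * real n * t\<^sup>2)"
    using fin by (simp add: card_Pow powr_realpow)
  also have "\<dots> \<le> real n powr (- 1)"
    unfolding t_def
  proof (rule num[OF n assms(1)])
    have G: "real (grid_size s) \<le> 2 * real n powr \<alpha>"
    proof -
      have a1: "real n powr \<alpha> \<ge> 1" using n assms by (simp add: ge_one_powr_ge_zero)
      have "1 / s = real n powr \<alpha>" unfolding s_def using n by (simp add: powr_minus divide_inverse)
      then have "real (grid_size s) = real (nat \<lceil>real n powr \<alpha>\<rceil>)" by (simp add: grid_size_def)
      also have "\<dots> \<le> real n powr \<alpha> + 1" using a1 by linarith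
      finally show ?thesis using a1 by linarith
    qed
    show "real (card cells) \<le> (2 * real n powr \<alpha>) ^ CARD('d)"
      unfolding cells_def cells_card using power_mono[OF G, of "CARD('d)"] by simp
  qed simp
  finally have "M.prob (space ?M - {xs \<in> space ?M. grid_excess \<mu> n xs s \<le> t}) \<le> real n powr (- 1)" .
  then have "1 - real n powr (- 1) \<le> M.prob {xs \<in> space ?M. grid_excess \<mu> n xs s \<le> t}"
    unfolding M.prob_compl[OF Gmeas] by linarith
  then show ?thesis unfolding s_def t_def .
qed

theorem lemmaA2:
  fixes \<alpha> :: real
  assumes "\<alpha> \<ge> 0"
  shows "\<exists>c>0. \<exists>(C::real) (p::nat) (N::nat). \<forall>(\<mu> :: (real ^ 'd) measure) (n::nat).
           prob_space \<mu> \<longrightarrow> sets \<mu> = sets borel \<longrightarrow> measure \<mu> unit_cube = 1 \<longrightarrow> n \<ge> N \<longrightarrow>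
           measure (PiM {..<n} (\<lambda>_. \<mu>))
             {xs \<in> space (PiM {..<n} (\<lambda>_. \<mu>)).
                grid_excess \<mu> n xs (real n powr (-\<alpha>))
                  \<le> C * (ln (real n)) ^ p * real n powr (real CARD('d) * \<alpha> / 2 - 1 / 2)}
           \<ge> 1 - real n powr (-c)"
proof -
  have H: "\<forall>(\<mu> :: (real ^ 'd) measure) (n::nat).
           prob_space \<mu> \<longrightarrow> sets \<mu> = sets borel \<longrightarrow> measure \<mu> unit_cube = 1 \<longrightarrow> n \<ge> 3 \<longrightarrow>
           measure (PiM {..<n} (\<lambda>_. \<mu>))
             {xs \<in> space (PiM {..<n} (\<lambda>_. \<mu>)).
                grid_excess \<mu> n xs (real n powr (-\<alpha>))
                  \<le> 2 ^ CARD('d) * (ln (real n)) ^ 1 * real n powr (real CARD('d) * \<alpha> / 2 - 1 / 2)}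
           \<ge> 1 - real n powr (-1)"
    apply (intro allI impI)
    apply (rule main_bound[OF assms])
    by assumption+
  show ?thesis
    apply (rule exI[where x="1::real"])
    apply (rule conjI)
     apply simp
    apply (rule exI[where x="2 ^ CARD('d)"])
    apply (rule exI[where x="1::nat"])
    apply (rule exI[where x="3::nat"])
    apply (rule H)
    done
qed

end
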